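(* Let $N\ge1$, $\mathcal D=\{1,\dots,N\}$, and let $\mathcal G_{el}$ be an undirected graph on $\mathcal D$ with neighbor sets $\mathcal N_i$. For each $i$ let $C_{ti},L^C_{ti},R^C_{ti},R_{Li}>0$ and gains satisfying $k^C_{1,i}<1$, $k^C_{2,i}<R^C_{ti}$, $k^C_{3,i}>0$; for each edge let $R_{ij}=R_{ji}>0$. Fix $\bar\sigma>0$, set $\eta_i=\bar\sigma C_{ti}$, $p^C_{22,i}=\frac{L^C_{ti}\eta_i}{C_{ti}(1-k^C_{1,i})}$, $P_i^C=\mathrm{diag}\big(\eta_i,p^C_{22,i},\frac{k^C_{3,i}}{L^C_{ti}}p^C_{22,i}\big)$ and $\mathbf P^C=\mathrm{diag}(P_1^C,\dots,P_N^C)$. Then $(\mathbf F^C)^T\mathbf P^C+\mathbf P^C\mathbf F^C\le 0$.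
   Context: $e_1=(1,0,0)^T$. $F_i^C=\begin{bmatrix}0&\frac{1}{C_{ti}}&0\\ \frac{k^C_{1,i}-1}{L^C_{ti}}&\frac{k^C_{2,i}-R^C_{ti}}{L^C_{ti}}&\frac{k^C_{3,i}}{L^C_{ti}}\\ 0&-1&0\end{bmatrix}$. $\mathbf F^C\in\mathbb{R}^{3N\times3N}$ is the closed-loop matrix of the network of current-controlled units: its $(i,i)$ block is $F_i^C-\Big(\frac{1}{R_{Li}C_{ti}}+\sum_{j\in\mathcal N_i}\frac{1}{R_{ij}C_{ti}}\Big)e_1e_1^T$, its $(i,j)$ block for $j\ne i$ is $\frac{1}{R_{ij}C_{ti}}e_1e_1^T$ if $j\in\mathcal N_i$ and $0$ otherwise. Matrix inequalities are in the semidefinite sense. *)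

theory Defs
  imports Main "Jordan_Normal_Form.Matrix"
begin

text \<open>Units are indexed by 0..<N (the paper's 1..N shifted by one).
  Parameters are functions of the unit index; R i j is the line resistance.\<close>

definition neg_semidef :: "nat \<Rightarrow> real mat \<Rightarrow> bool" where
  "neg_semidef n M \<longleftrightarrow> M \<in> carrier_mat n n \<and>
     (\<forall>x \<in> carrier_vec n. x \<bullet> (M *\<^sub>v x) \<le> 0)"

definition E11 :: "real mat" where
  "E11 = mat 3 3 (\<lambda>(a,b). if a = 0 \<and> b = 0 then 1 else 0)"

definition FiC :: "real \<Rightarrow> real \<Rightarrow> real \<Rightarrow> real \<Rightarrow> real \<Rightarrow> real \<Rightarrow> real mat" where
  "FiC Ct Lt Rt k1 k2 k3 = mat_of_rows_list 3
     [[0, 1 / Ct, 0],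
      [(k1 - 1) / Lt, (k2 - Rt) / Lt, k3 / Lt],
      [0, -1, 0]]"

definition FC_block ::
  "(nat \<Rightarrow> nat set) \<Rightarrow> (nat \<Rightarrow> real) \<Rightarrow> (nat \<Rightarrow> real) \<Rightarrow> (nat \<Rightarrow> real) \<Rightarrow> (nat \<Rightarrow> real)
   \<Rightarrow> (nat \<Rightarrow> nat \<Rightarrow> real) \<Rightarrow> (nat \<Rightarrow> real) \<Rightarrow> (nat \<Rightarrow> real) \<Rightarrow> (nat \<Rightarrow> real)
   \<Rightarrow> nat \<Rightarrow> nat \<Rightarrow> real mat" where
  "FC_block Nb Ct Lt Rt RL R k1 k2 k3 i j =
     (if i = j then
        FiC (Ct i) (Lt i) (Rt i) (k1 i) (k2 i) (k3 i)
        - (1 / (RL i * Ct i) + (\<Sum>l\<in>Nb i. 1 / (R i l * Ct i))) \<cdot>\<^sub>m E11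
      else if j \<in> Nb i then (1 / (R i j * Ct i)) \<cdot>\<^sub>m E11
      else 0\<^sub>m 3 3)"

definition FC ::
  "nat \<Rightarrow> (nat \<Rightarrow> nat set) \<Rightarrow> (nat \<Rightarrow> real) \<Rightarrow> (nat \<Rightarrow> real) \<Rightarrow> (nat \<Rightarrow> real) \<Rightarrow> (nat \<Rightarrow> real)
   \<Rightarrow> (nat \<Rightarrow> nat \<Rightarrow> real) \<Rightarrow> (nat \<Rightarrow> real) \<Rightarrow> (nat \<Rightarrow> real) \<Rightarrow> (nat \<Rightarrow> real) \<Rightarrow> real mat" where
  "FC N Nb Ct Lt Rt RL R k1 k2 k3 =
     mat (3 * N) (3 * N)
       (\<lambda>(r, c). FC_block Nb Ct Lt Rt RL R k1 k2 k3 (r div 3) (c div 3) $$ (r mod 3, c mod 3))"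

definition PiC :: "real \<Rightarrow> real \<Rightarrow> real \<Rightarrow> real \<Rightarrow> real \<Rightarrow> real mat" where
  "PiC sigma Ct Lt k1 k3 =
     (let eta = sigma * Ct;
          p22 = Lt * eta / (Ct * (1 - k1))
      in mat_diag 3 (\<lambda>a. if a = 0 then eta else if a = 1 then p22 else k3 / Lt * p22))"

definition PC :: "nat \<Rightarrow> real \<Rightarrow> (nat \<Rightarrow> real) \<Rightarrow> (nat \<Rightarrow> real) \<Rightarrow> (nat \<Rightarrow> real) \<Rightarrow> (nat \<Rightarrow> real) \<Rightarrow> real mat" where
  "PC N sigma Ct Lt k1 k3 = diag_block_mat (map (\<lambda>i. PiC sigma (Ct i) (Lt i) (k1 i) (k3 i)) [0..<N])"

end

theory Submission imports Defs begin

lemma diag_block_entry: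
  "(\<forall>A\<in>set As. A \<in> carrier_mat 3 3) \<Longrightarrow>
   diag_block_mat As \<in> carrier_mat (3*length As) (3*length As) \<and>
   (\<forall>r c. r < 3*length As \<longrightarrow> c < 3*length As \<longrightarrow>
     diag_block_mat As $$ (r,c) = (if r div 3 = c div 3 then (As!(r div 3)) $$ (r mod 3, c mod 3) else 0))"
proof (induction As)
  case Nil
  then show ?case by auto
next
  case (Cons A As)
  then have A: "A \<in> carrier_mat 3 3" and B: "diag_block_mat As \<in> carrier_mat (3*length As) (3*length As)"
    and IH: "\<forall>r c. r < 3*length As \<longrightarrow> c < 3*length As \<longrightarrow>
     diag_block_mat As $$ (r,c) = (if r div 3 = c div 3 then (As!(r div 3)) $$ (r mod 3, c mod 3) else 0)"
    by auto
  show ?case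
  proof (intro conjI allI impI)
    show "diag_block_mat (A # As) \<in> carrier_mat (3 * length (A # As)) (3 * length (A # As))"
      using A B by (auto simp: Let_def)
  next
    fix r c assume r: "r < 3 * length (A # As)" and c: "c < 3 * length (A # As)"
    show "diag_block_mat (A # As) $$ (r, c) = (if r div 3 = c div 3 then ((A # As) ! (r div 3)) $$ (r mod 3, c mod 3) else 0)"
    proof (cases "r < 3")
      case True
      then show ?thesis using A B r c
        by (cases "c < 3") (auto simp: Let_def)
    next
      case False
      have rd: "(r - 3) div 3 = r div 3 - 1" "(r-3) mod 3 = r mod 3" using False by (auto simp: le_div_geq le_mod_geq)
      have rs: "(A#As) ! (r div 3) = As ! (r div 3 - 1)" using False
        by (metis One_nat_def Suc_pred div_greater_zero_iff nth_Cons_Suc zero_less_numeral not_less)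
      show ?thesis
      proof (cases "c < 3")
        case True
        then show ?thesis using A B r c False by (auto simp: Let_def)
      next
        case cF: False
        have cd: "(c - 3) div 3 = c div 3 - 1" "(c-3) mod 3 = c mod 3" using cF by (auto simp: le_div_geq le_mod_geq)
        have "r - 3 < 3 * length As" "c - 3 < 3*length As" using r c False cF by auto
        have e1: "diag_block_mat (A # As) $$ (r, c) = diag_block_mat As $$ (r-3, c-3)"
          using A B r c False cF by (simp add: Let_def)
        have r1: "r div 3 \<ge> 1" "c div 3 \<ge> 1" using False cF by auto
        have eqv: "(r div 3 - 1 = c div 3 - 1) = (r div 3 = c div 3)" using r1 by linarith
        show ?thesis unfolding e1 using IH[rule_format, OF \<open>r - 3 < 3 * length As\<close> \<open>c - 3 < 3*length As\<close>]
          unfolding rd cd eqv rs by simp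
      qed
    qed
  qed
qed

lemma sym_sum:
  fixes v :: "nat \<Rightarrow> real"
  assumes sub: "\<forall>i<N. Nb i \<subseteq> {0..<N}"
    and sym: "\<forall>i<N. \<forall>j<N. j \<in> Nb i \<longleftrightarrow> i \<in> Nb j"
    and Rs: "\<forall>i<N. \<forall>j\<in>Nb i. R i j = R j i \<and> R i j > 0"
  shows "(\<Sum>i<N. \<Sum>j\<in>Nb i. (v i * v j - v i ^ 2) / R i j) \<le> 0"
proof -
  define E where "E = Sigma {..<N} Nb"
  define g where "g = (\<lambda>(i,j). (v i * v j - v i ^ 2) / R i j)"
  have fin: "\<And>i. i \<in> {..<N} \<Longrightarrow> finite (Nb i)" using sub by (meson finite_atLeastLessThan finite_subset lessThan_iff)
  have finE: "finite E" unfolding E_def using fin by auto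
  have S: "(\<Sum>i<N. \<Sum>j\<in>Nb i. (v i * v j - v i ^ 2) / R i j) = sum g E"
    unfolding E_def g_def by (subst sum.Sigma[symmetric]) (use fin in auto)
  have bij: "bij_betw prod.swap E E"
    unfolding E_def bij_betw_def inj_on_def using sub sym by (auto simp: image_iff) (force+)
  have sw: "sum (\<lambda>p. g (prod.swap p)) E = sum g E"
    using sum.reindex_bij_betw[OF bij, of g] by simp
  have "2 * sum g E = sum (\<lambda>p. g p + g (prod.swap p)) E"
    using sw by (simp add: sum.distrib)
  also have "\<dots> \<le> 0"
  proof (rule sum_nonpos)
    fix p assume p: "p \<in> E"
    obtain i j where ij: "p = (i,j)" by force
    have i: "i < N" and j: "j \<in> Nb i" using p ij E_def by auto
    have Rij: "R j i = R i j" "R i j > 0" using Rs i j by auto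
    have "g p + g (prod.swap p) = - ((v i - v j)^2 / R i j)"
      unfolding ij g_def using Rij by (simp add: field_simps power2_eq_square)
    also have "\<dots> \<le> 0" using Rij by simp
    finally show "g p + g (prod.swap p) \<le> 0" .
  qed
  finally show ?thesis using S by simp
qed

lemma sum_split3: "(\<Sum>r<3*(N::nat). f r) = (\<Sum>i<N. f (3*i) + f (3*i+1) + f (3*i+2))"
  by (induct N) (auto simp: numeral_3_eq_3 add_ac)


lemma PC_eq:
  "PC N sigma Ct Lt k1 k3 = mat_diag (3*N) (\<lambda>r. PiC sigma (Ct (r div 3)) (Lt (r div 3)) (k1 (r div 3)) (k3 (r div 3)) $$ (r mod 3, r mod 3))"
proof -
  let ?As = "map (\<lambda>i. PiC sigma (Ct i) (Lt i) (k1 i) (k3 i)) [0..<N]"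
  have car: "\<forall>A\<in>set ?As. A \<in> carrier_mat 3 3" by (auto simp: PiC_def Let_def)
  note D = diag_block_entry[OF car]
  have PiC_ent: "\<And>i a b. a < 3 \<Longrightarrow> b < 3 \<Longrightarrow> PiC sigma (Ct i) (Lt i) (k1 i) (k3 i) $$ (a,b) = (if a = b then PiC sigma (Ct i) (Lt i) (k1 i) (k3 i) $$ (a,a) else 0)"
    by (auto simp: PiC_def Let_def mat_diag_def)
  show ?thesis unfolding PC_def
  proof (rule eq_matI)
    fix r c assume r: "r < dim_row (mat_diag (3*N) (\<lambda>r. PiC sigma (Ct (r div 3)) (Lt (r div 3)) (k1 (r div 3)) (k3 (r div 3)) $$ (r mod 3, r mod 3)))" and c: "c < dim_col (mat_diag (3*N) (\<lambda>r. PiC sigma (Ct (r div 3)) (Lt (r div 3)) (k1 (r div 3)) (k3 (r div 3)) $$ (r mod 3, r mod 3)))"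
    then have r': "r < 3*N" "c < 3*N" by (auto simp: mat_diag_def)
    have "r div 3 < N" using r' by auto
    have iff: "(r div 3 = c div 3 \<and> r mod 3 = c mod 3) = (r = c)" by (metis div_mod_decomp)
    show "diag_block_mat ?As $$ (r, c) = mat_diag (3*N) (\<lambda>r. PiC sigma (Ct (r div 3)) (Lt (r div 3)) (k1 (r div 3)) (k3 (r div 3)) $$ (r mod 3, r mod 3)) $$ (r, c)"
      using D r' \<open>r div 3 < N\<close> iff PiC_ent[of "r mod 3" "c mod 3" "r div 3"]
      by (auto simp: mat_diag_def)
  qed (use D in \<open>auto simp: mat_diag_def\<close>)
qed


theorem proposition3:
  fixes N :: nat and Nb :: "nat \<Rightarrow> nat set"
    and Ct Lt Rt RL k1 k2 k3 :: "nat \<Rightarrow> real" and R :: "nat \<Rightarrow> nat \<Rightarrow> real"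
    and sigma :: real
  assumes "N \<ge> 1"
    and nb_sub: "\<forall>i<N. Nb i \<subseteq> {0..<N}"
    and nb_irrefl: "\<forall>i<N. i \<notin> Nb i"
    and nb_sym: "\<forall>i<N. \<forall>j<N. j \<in> Nb i \<longleftrightarrow> i \<in> Nb j"
    and pos: "\<forall>i<N. Ct i > 0 \<and> Lt i > 0 \<and> Rt i > 0 \<and> RL i > 0"
    and gains: "\<forall>i<N. k1 i < 1 \<and> k2 i < Rt i \<and> k3 i > 0"
    and Rsym: "\<forall>i<N. \<forall>j\<in>Nb i. R i j = R j i \<and> R i j > 0"
    and "sigma > 0"
  shows "neg_semidef (3 * N)
           (transpose_mat (FC N Nb Ct Lt Rt RL R k1 k2 k3) * PC N sigma Ct Lt k1 k3
            + PC N sigma Ct Lt k1 k3 * FC N Nb Ct Lt Rt RL R k1 k2 k3)"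
proof -
  define n where "n = 3 * N"
  define F where "F = FC N Nb Ct Lt Rt RL R k1 k2 k3"
  define D where "D = (\<lambda>i a. PiC sigma (Ct i) (Lt i) (k1 i) (k3 i) $$ (a,a))"
  define d where "d = (\<lambda>r. D (r div 3) (r mod 3))"
  define Fb where "Fb = (\<lambda>i j a b. FC_block Nb Ct Lt Rt RL R k1 k2 k3 i j $$ (a,b))"
  have P: "PC N sigma Ct Lt k1 k3 = mat_diag n d"
    unfolding PC_eq n_def d_def D_def by simp
  have Fc: "F \<in> carrier_mat n n" unfolding F_def FC_def n_def by simp
  have Fe: "\<And>r c. r < n \<Longrightarrow> c < n \<Longrightarrow> F $$ (r,c) = Fb (r div 3) (c div 3) (r mod 3) (c mod 3)"
    unfolding F_def FC_def n_def Fb_def by simp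
  define M where "M = transpose_mat F * mat_diag n d + mat_diag n d * F"
  have Mc: "M \<in> carrier_mat n n" unfolding M_def using Fc by (meson add_carrier_mat mult_carrier_mat transpose_carrier_mat mat_diag_dim)
  have Me: "\<And>r c. r < n \<Longrightarrow> c < n \<Longrightarrow> M $$ (r,c) = F $$ (c,r) * d c + d r * F $$ (r,c)"
    unfolding M_def using Fc
    by (simp add: mat_diag_mult_left[OF Fc] mat_diag_mult_right[of "transpose_mat F" n n])
  show ?thesis unfolding neg_semidef_def P F_def[symmetric] n_def[symmetric] M_def[symmetric]
  proof (intro conjI ballI)
    show "M \<in> carrier_mat n n" by (rule Mc)
  next
    fix x :: "real vec" assume x: "x \<in> carrier_vec n"
    have Q: "x \<bullet> (M *\<^sub>v x) = (\<Sum>r<n. \<Sum>c<n. x $ r * (M $$ (r,c) * x $ c))"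
      using x Mc by (simp add: scalar_prod_def sum_distrib_left lessThan_atLeast0)
    also have "\<dots> = 2 * (\<Sum>r<n. \<Sum>c<n. d r * x $ r * F $$ (r,c) * x $ c)"
    proof -
      have "(\<Sum>r<n. \<Sum>c<n. x $ r * (M $$ (r,c) * x $ c)) =
            (\<Sum>r<n. \<Sum>c<n. d c * x $ c * F $$ (c,r) * x $ r) + (\<Sum>r<n. \<Sum>c<n. d r * x $ r * F $$ (r,c) * x $ c)"
        by (simp add: Me sum.distrib[symmetric] algebra_simps)
      also have "(\<Sum>r<n. \<Sum>c<n. d c * x $ c * F $$ (c,r) * x $ r) = (\<Sum>r<n. \<Sum>c<n. d r * x $ r * F $$ (r,c) * x $ c)"
        by (rule sum.swap)
      finally show ?thesis by simp
    qed
    finally have Qe: "x \<bullet> (M *\<^sub>v x) = 2 * (\<Sum>r<n. \<Sum>c<n. d r * x $ r * F $$ (r,c) * x $ c)" .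
    define X where "X = (\<lambda>i a. x $ (3*i+a))"
    define G where "G = (\<lambda>i j.
        D i 0 * X i 0 * Fb i j 0 0 * X j 0 + D i 0 * X i 0 * Fb i j 0 1 * X j 1 + D i 0 * X i 0 * Fb i j 0 2 * X j 2
      + D i 1 * X i 1 * Fb i j 1 0 * X j 0 + D i 1 * X i 1 * Fb i j 1 1 * X j 1 + D i 1 * X i 1 * Fb i j 1 2 * X j 2
      + D i 2 * X i 2 * Fb i j 2 0 * X j 0 + D i 2 * X i 2 * Fb i j 2 1 * X j 1 + D i 2 * X i 2 * Fb i j 2 2 * X j 2)"
    have dm: "\<And>i::nat. (3*i) div 3 = i" "\<And>i::nat. (3*i+1) div 3 = i" "\<And>i::nat. (3*i+2) div 3 = i"
       "\<And>i::nat. (3*i) mod 3 = 0" "\<And>i::nat. (3*i+1) mod 3 = 1" "\<And>i::nat. (3*i+2) mod 3 = 2" by presburger+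
    have T1: "(\<Sum>r<n. \<Sum>c<n. d r * x $ r * F $$ (r,c) * x $ c)
        = (\<Sum>r<n. \<Sum>c<n. d r * x $ r * Fb (r div 3) (c div 3) (r mod 3) (c mod 3) * x $ c)"
      by (intro sum.cong refl) (simp add: Fe)
    have T2: "\<dots> = (\<Sum>i<N. \<Sum>j<N. G i j)"
      unfolding n_def sum_split3 d_def dm G_def X_def
      by (simp add: sum.distrib add_ac)
    define al where "al = (\<lambda>i. 1 / (RL i * Ct i) + (\<Sum>l\<in>Nb i. 1 / (R i l * Ct i)))"
    define p where "p = (\<lambda>i. Lt i * (sigma * Ct i) / (Ct i * (1 - k1 i)))"
    have Dv: "\<And>i. D i 0 = sigma * Ct i" "\<And>i. D i 1 = p i" "\<And>i. D i 2 = k3 i / Lt i * p i"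
      unfolding D_def p_def by (simp_all add: PiC_def Let_def mat_diag_def)
    have Fd: "\<And>i. Fb i i 0 0 = - al i" "\<And>i. Fb i i 0 1 = 1 / Ct i" "\<And>i. Fb i i 0 2 = 0"
      "\<And>i. Fb i i 1 0 = (k1 i - 1) / Lt i" "\<And>i. Fb i i 1 1 = (k2 i - Rt i) / Lt i" "\<And>i. Fb i i 1 2 = k3 i / Lt i"
      "\<And>i. Fb i i 2 0 = 0" "\<And>i. Fb i i 2 1 = -1" "\<And>i. Fb i i 2 2 = 0"
      unfolding Fb_def FC_block_def FiC_def E11_def mat_of_rows_list_def al_def
      by (simp_all add: numeral_2_eq_2 numeral_3_eq_3)
    have Fo: "\<And>i j a b. i \<noteq> j \<Longrightarrow> a < 3 \<Longrightarrow> b < 3 \<Longrightarrow> Fb i j a b = (if j \<in> Nb i \<and> a = 0 \<and> b = 0 then 1 / (R i j * Ct i) else 0)"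
      unfolding Fb_def FC_block_def E11_def by auto
    define H where "H = (\<lambda>i. p i * (k2 i - Rt i) / Lt i * (X i 1)^2 - sigma * Ct i * al i * (X i 0)^2)"
    define K where "K = (\<lambda>i j. sigma * X i 0 * X j 0 / R i j)"
    have Gij: "G i j = (if i = j then H i else 0) + (if j \<in> Nb i then K i j else 0)" if ij: "i < N" "j < N" for i j
    proof (cases "i = j")
      case True
      have c: "Ct i > 0" "Lt i > 0" "1 - k1 i > 0" using pos gains ij by auto
      have e1: "sigma*Ct i*(1/Ct i) = sigma" using c by simp
      have e2: "p i * ((k1 i - 1)/Lt i) = -sigma" unfolding p_def using c by (simp add: field_simps)
      have "G i i = X i 0 * X i 1 * (sigma*Ct i*(1/Ct i) + p i*((k1 i - 1)/Lt i))
          + X i 1 * X i 2 * (p i * (k3 i/Lt i) - k3 i/Lt i*p i) + H i"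
        unfolding G_def Dv Fd H_def by (simp add: algebra_simps power2_eq_square)
      also have "\<dots> = H i" unfolding e1 e2 by simp
      finally have "G i i = H i" .
      then show ?thesis using True nb_irrefl ij by auto
    next
      case False
      have c: "Ct i > 0" using pos ij by auto
      show ?thesis unfolding G_def using False c
        by (simp add: Fo Dv K_def)
    qed
    have rowsum: "(\<Sum>j<N. G i j) = H i + (\<Sum>j\<in>Nb i. K i j)" if i: "i < N" for i
    proof -
      have "(\<Sum>j<N. G i j) = (\<Sum>j<N. (if i = j then H i else 0)) + (\<Sum>j<N. (if j \<in> Nb i then K i j else 0))"
        using Gij i by (simp add: sum.distrib)
      also have "(\<Sum>j<N. (if i = j then H i else 0)) = H i" using i by simp
      also have "(\<Sum>j<N. (if j \<in> Nb i then K i j else 0)) = (\<Sum>j\<in>Nb i. K i j)"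
      proof -
        have "{..<N} \<inter> Nb i = Nb i" using nb_sub i by fastforce
        then show ?thesis by (simp add: sum.inter_restrict[symmetric])
      qed
      finally show ?thesis .
    qed
    have rowsum2: "H i + (\<Sum>j\<in>Nb i. K i j) = (p i * (k2 i - Rt i) / Lt i * (X i 1)^2 - sigma / RL i * (X i 0)^2)
        + sigma * (\<Sum>j\<in>Nb i. (X i 0 * X j 0 - (X i 0)^2) / R i j)" if i: "i < N" for i
    proof -
      have c: "Ct i > 0" "RL i > 0" using pos i by auto
      have "Ct i * al i = 1 / RL i + (\<Sum>l\<in>Nb i. 1 / R i l)"
        unfolding al_def using c by (simp add: sum_distrib_left field_simps)
      then have "sigma * Ct i * al i * (X i 0)^2 = sigma / RL i * (X i 0)^2 + sigma * (\<Sum>l\<in>Nb i. (X i 0)^2 / R i l)"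
        by (simp add: sum_distrib_left algebra_simps)
      moreover have "(\<Sum>j\<in>Nb i. K i j) = sigma * (\<Sum>j\<in>Nb i. X i 0 * X j 0 / R i j)"
        unfolding K_def by (simp add: sum_distrib_left mult.assoc)
      ultimately show ?thesis unfolding H_def
        by (simp add: diff_divide_distrib sum_subtractf algebra_simps)
    qed
    have A: "(\<Sum>i<N. p i * (k2 i - Rt i) / Lt i * (X i 1)^2 - sigma / RL i * (X i 0)^2) \<le> 0"
    proof (rule sum_nonpos)
      fix i assume "i \<in> {..<N}"
      then have c: "Ct i > 0" "Lt i > 0" "1 - k1 i > 0" "k2 i - Rt i < 0" "RL i > 0" using pos gains by auto
      have "p i > 0" unfolding p_def using c \<open>sigma > 0\<close> by simp
      then have "p i * (k2 i - Rt i) / Lt i \<le> 0" using c by (simp add: divide_nonpos_pos mult_pos_neg less_imp_le)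
      then have "p i * (k2 i - Rt i) / Lt i * (X i 1)^2 \<le> 0" using mult_nonpos_nonneg zero_le_power2 by blast
      moreover have "sigma / RL i * (X i 0)^2 \<ge> 0" using c \<open>sigma > 0\<close> by simp
      ultimately show "p i * (k2 i - Rt i) / Lt i * (X i 1)^2 - sigma / RL i * (X i 0)^2 \<le> 0" by linarith
    qed
    have B: "(\<Sum>i<N. \<Sum>j\<in>Nb i. (X i 0 * X j 0 - (X i 0)^2) / R i j) \<le> 0"
      using sym_sum[OF nb_sub nb_sym Rsym, of "\<lambda>i. X i 0"] by simp
    have "(\<Sum>i<N. \<Sum>j<N. G i j) = (\<Sum>i<N. p i * (k2 i - Rt i) / Lt i * (X i 1)^2 - sigma / RL i * (X i 0)^2)
        + sigma * (\<Sum>i<N. \<Sum>j\<in>Nb i. (X i 0 * X j 0 - (X i 0)^2) / R i j)"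
      using rowsum rowsum2 by (simp add: sum.distrib sum_distrib_left)
    also have "\<dots> \<le> 0" using A B \<open>sigma > 0\<close> by (simp add: add_nonpos_nonpos mult_nonneg_nonpos)
    finally show "x \<bullet> (M *\<^sub>v x) \<le> 0" using Qe T1 T2 by simp
  qed
qed

end
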